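(* Let $n$ and $0<n_1<\cdots<n_d<n$ be integers with $m_1=n_1$, $m_k=n_k-n_{k-1}$ ($2\le k\le d$), $m_{d+1}=n-n_d$, and regard $\mathrm{Flag}(n_1,\dots,n_d;n)=\{(VJ_1V^{\mathsf T},\dots,VJ_dV^{\mathsf T}):V\in\mathrm{O}(n)\}\subseteq(\mathbb{R}^{n\times n})^d$. Let $\mathfrak f=V(J_1,\dots,J_d)V^{\mathsf T}$. Then \[ \mathbb{T}_{\mathfrak f}\mathrm{Flag}(n_1,\dots,n_d;n)=\{V(AJ_1-J_1A,\dots,AJ_d-J_dA)V^{\mathsf T}: A\in\mathfrak{so}(n),\ A(p,p)=0 \text{ for } p=1,\dots,d+1\}. \] Equivalently, $\mathbb{T}_{\mathfrak f}\mathrm{Flag}(n_1,\dots,n_d;n)$ consists of the tuples $V(X_1,\dots,X_d)V^{\mathsf T}$ with $X_1,\dots,X_d$ symmetric $n\times n$ matrices satisfying \[ X_k(k,l)=-X_l(k,l),\quad X_k(p,q)=0,\quad X_k(k,k)=0 \] for all $1\le k,l\le d$ and $1\le p,q\le d+1$ with $p,q,l\neq k$.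
   Context: $J_k=\operatorname{diag}(-I_{m_1},\dots,-I_{m_{k-1}},I_{m_k},-I_{m_{k+1}},\dots,-I_{m_{d+1}})$. $V(X_1,\dots,X_d)V^{\mathsf T}$ denotes $(VX_1V^{\mathsf T},\dots,VX_dV^{\mathsf T})$. For an $n\times n$ matrix $M$, $M(p,q)\in\mathbb{R}^{m_p\times m_q}$ denotes its $(p,q)$ block in the partition $n=m_1+\cdots+m_{d+1}$. $\mathfrak{so}(n)$ is the space of real skew-symmetric $n\times n$ matrices. *)

theory Defs
  imports "HOL-Analysis.Analysis"
begin

text \<open>Indices of n x n matrices are the elements of a finite linearly ordered type 'n
  with CARD('n) = n; the position (0-based) of an index i is the number of indices below it.\<close>
definition posn :: "'n::{finite,linorder} \<Rightarrow> nat" where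
  "posn i = card {j. j < i}"

text \<open>Block index (1-based) of an index i for the partition given by
  ns 0 = 0 < ns 1 < ... < ns d < ns (d+1) = n: the p with ns (p-1) <= posn i < ns p.\<close>
definition blk :: "(nat \<Rightarrow> nat) \<Rightarrow> 'n::{finite,linorder} \<Rightarrow> nat" where
  "blk ns i = (LEAST p. posn i < ns p)"

definition Jmat :: "(nat \<Rightarrow> nat) \<Rightarrow> nat \<Rightarrow> real^('n::{finite,linorder})^('n::{finite,linorder})" where
  "Jmat ns k = (\<chi> i j. if i = j then (if blk ns i = k then 1 else -1) else 0)"

definition Flag :: "(nat \<Rightarrow> nat) \<Rightarrow> nat \<Rightarrow> (nat \<Rightarrow> real^('n::{finite,linorder})^('n::{finite,linorder})) set" where
  "Flag ns d = {F. \<exists>V. orthogonal_matrix V \<and>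
      (\<forall>k\<in>{1..d}. F k = V ** Jmat ns k ** transpose V) \<and> (\<forall>k. k \<notin> {1..d} \<longrightarrow> F k = 0)}"

definition tangent_space ::
  "('i \<Rightarrow> 'a::real_normed_vector) set \<Rightarrow> ('i \<Rightarrow> 'a) \<Rightarrow> ('i \<Rightarrow> 'a) set" where
  "tangent_space S x = {v. \<exists>\<gamma> e. e > 0 \<and> \<gamma> 0 = x \<and> (\<forall>t. \<bar>t\<bar> < e \<longrightarrow> \<gamma> t \<in> S) \<and>
      (\<forall>k. ((\<lambda>t. \<gamma> t k) has_vector_derivative v k) (at 0))}"

end

theory Submission
  imports Defs
begin


lemma matrix_add_rdistrib': "((B + C) ** A) = (B ** A) + (C ** (A::real^'p^'n))"
  by (vector matrix_matrix_mult_def sum.distrib[symmetric] field_simps)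

lemma bb_mm: "bounded_bilinear (\<lambda>(A::real^'n^'m) (B::real^'p^'n). A ** B)"
proof -
  have "bilinear (\<lambda>(A::real^'n^'m) (B::real^'p^'n). A ** B)"
    unfolding bilinear_def
    by (auto intro!: linearI simp: matrix_add_ldistrib matrix_add_rdistrib' matrix_scalar_ac scalar_matrix_assoc[symmetric])
  then show ?thesis using bilinear_conv_bounded_bilinear by blast
qed

lemma bl_tr: "bounded_linear (transpose :: real^'n^'m \<Rightarrow> real^'m^'n)"
proof -
  have "linear (transpose :: real^'n^'m \<Rightarrow> real^'m^'n)"
    by (auto intro!: linearI simp: transpose_def vec_eq_iff)
  then show ?thesis using linear_conv_bounded_linear by blast
qed

lemma deriv_mm:
  fixes f :: "real \<Rightarrow> real^'n^'m" and g :: "real \<Rightarrow> real^'p^'n"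
  assumes "(f has_vector_derivative f') (at x)" "(g has_vector_derivative g') (at x)"
  shows "((\<lambda>t. f t ** g t) has_vector_derivative (f x ** g' + f' ** g x)) (at x)"
  using bounded_bilinear.has_vector_derivative[OF bb_mm assms] by simp

lemma deriv_tr:
  fixes f :: "real \<Rightarrow> real^'n^'m"
  assumes "(f has_vector_derivative f') (at x)"
  shows "((\<lambda>t. transpose (f t)) has_vector_derivative transpose f') (at x)"
  using bounded_linear.has_vector_derivative[OF bl_tr assms] by simp

lemma deriv_const_zero:
  fixes g :: "real \<Rightarrow> 'a::real_normed_vector"
  assumes "(g has_vector_derivative g') (at 0)" "e > 0" "\<forall>t. \<bar>t\<bar> < e \<longrightarrow> g t = c"
  shows "g' = 0"
proof -
  have "((\<lambda>t. c) has_vector_derivative 0) (at 0)" by (rule has_vector_derivative_const)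
  then have "(g has_vector_derivative 0) (at 0)"
    by (rule has_vector_derivative_transform_within_open[where S="{-e<..<e}"]) (use assms in auto)
  then show ?thesis using assms(1) vector_derivative_unique_at by blast
qed

definition sg :: "(nat \<Rightarrow> nat) \<Rightarrow> nat \<Rightarrow> 'n::{finite,linorder} \<Rightarrow> real" where
  "sg ns k i = (if blk ns i = k then 1 else -1)"

lemma Jmat_nth: "Jmat ns k $ i $ j = (if i = j then sg ns k i else 0)"
  by (simp add: Jmat_def sg_def)

lemma Jmat_left: "(Jmat ns k ** M) $ i $ j = sg ns k i * M $ i $ j"
  by (simp add: matrix_matrix_mult_def Jmat_nth if_distrib if_distribR sum.delta cong: if_cong)

lemma Jmat_right: "(M ** Jmat ns k) $ i $ j = M $ i $ j * sg ns k j"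
  by (simp add: matrix_matrix_mult_def Jmat_nth if_distrib if_distribR sum.delta' cong: if_cong)

lemma Jmat_tr: "transpose (Jmat ns k) = Jmat ns k"
  by (simp add: vec_eq_iff transpose_def Jmat_nth)

lemma Jmat_sq: "Jmat ns k ** Jmat ns k = mat 1"
  by (simp add: vec_eq_iff Jmat_left Jmat_nth mat_def sg_def)

lemma Jmat_comm: "Jmat ns k ** Jmat ns l = Jmat ns l ** Jmat ns k"
  by (simp add: vec_eq_iff Jmat_left Jmat_nth)

lemma orth_conj_mult:
  assumes "orthogonal_matrix V"
  shows "(V ** A ** transpose V) ** (V ** B ** transpose V) = V ** (A ** B) ** transpose V"
proof -
  have "transpose V ** V = mat 1" using assms unfolding orthogonal_matrix_def by simp
  then show ?thesis by (metis matrix_mul_assoc matrix_mul_lid)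
qed

lemma orth_conj_inj:
  assumes "orthogonal_matrix V" "V ** A ** transpose V = V ** B ** transpose V"
  shows "A = B"
proof -
  have 1: "transpose V ** V = mat 1" using assms unfolding orthogonal_matrix_def by simp
  have "transpose V ** (V ** A ** transpose V) ** V = transpose V ** (V ** B ** transpose V) ** V"
    using assms(2) by simp
  then show ?thesis by (simp add: matrix_mul_assoc 1) (metis 1 matrix_mul_assoc matrix_mul_rid)
qed

lemma blk_range:
  assumes "ns 0 = 0" "ns (d + 1) = CARD('n)"
  shows "1 \<le> blk ns (i::'n::{finite,linorder}) \<and> blk ns i \<le> d + 1"
proof -
  have "{j. j < i} \<subset> UNIV" by auto
  then have "posn i < CARD('n)" unfolding posn_def by (simp add: psubset_card_mono)
  then have p: "posn i < ns (d+1)" using assms by simp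
  have "blk ns i \<le> d + 1" unfolding blk_def by (rule Least_le) (rule p)
  moreover have "posn i < ns (blk ns i)" unfolding blk_def by (rule LeastI) (rule p)
  then have "blk ns i \<noteq> 0" using assms by (metis not_less_zero)
  ultimately show ?thesis by auto
qed



definition ach :: "real^'n^'n \<Rightarrow> bool" where
  "ach A \<longleftrightarrow> (\<exists>W. (\<forall>t. orthogonal_matrix (W t)) \<and> W 0 = mat 1 \<and> (W has_vector_derivative A) (at 0))"

lemma ach_0: "ach 0"
  unfolding ach_def
  by (rule exI[of _ "\<lambda>t. mat 1"]) (auto intro: orthogonal_matrix_id has_vector_derivative_const)

lemma ach_add: assumes "ach A" "ach B" shows "ach (A + B)"
proof -
  obtain W1 where W1: "\<forall>t. orthogonal_matrix (W1 t)" "W1 0 = mat 1" "(W1 has_vector_derivative A) (at 0)"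
    using assms(1) ach_def by blast
  obtain W2 where W2: "\<forall>t. orthogonal_matrix (W2 t)" "W2 0 = mat 1" "(W2 has_vector_derivative B) (at 0)"
    using assms(2) ach_def by blast
  have "((\<lambda>t. W1 t ** W2 t) has_vector_derivative (W1 0 ** B + A ** W2 0)) (at 0)"
    by (rule deriv_mm[OF W1(3) W2(3)])
  then have "((\<lambda>t. W1 t ** W2 t) has_vector_derivative (A + B)) (at 0)"
    using W1 W2 by (simp add: add.commute)
  then show ?thesis unfolding ach_def using W1 W2 orthogonal_matrix_mul
    by (intro exI[of _ "\<lambda>t. W1 t ** W2 t"]) auto
qed

lemma ach_sum: "finite S \<Longrightarrow> (\<And>x. x \<in> S \<Longrightarrow> ach (f x)) \<Longrightarrow> ach (sum f S)"
  by (induction S rule: finite_induct) (auto intro: ach_0 ach_add)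

definition Em :: "'n \<Rightarrow> 'n \<Rightarrow> real^'n^'n" where
  "Em i j = (\<chi> r c. if r = i \<and> c = j then 1 else 0)"

definition Km :: "'n \<Rightarrow> 'n \<Rightarrow> real^'n^'n" where
  "Km i j = Em i j - Em j i"

definition Gm :: "'n \<Rightarrow> 'n \<Rightarrow> real \<Rightarrow> real^'n^'n" where
  "Gm i j t = mat 1 + (cos t - 1) *\<^sub>R (Em i i + Em j j) + sin t *\<^sub>R Km i j"

lemma Gm_nth: "i \<noteq> j \<Longrightarrow> Gm i j t $ r $ c =
   (if r = c then (if r = i \<or> r = j then cos t else 1)
    else if r = i \<and> c = j then sin t else if r = j \<and> c = i then - sin t else 0)"
  by (auto simp: Gm_def Km_def Em_def mat_def)

lemma Gm_orth:
  assumes ij: "i \<noteq> j"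
  shows "orthogonal_matrix (Gm i j t)"
proof -
  let ?G = "Gm i j t"
  have "(transpose ?G ** ?G) $ r $ c = mat 1 $ r $ c" for r c
  proof -
    have fin: "finite (UNIV - {i, j})" by simp
    have sc: "sin t * sin t + cos t * cos t = 1" using sin_cos_squared_add[of t] by (simp add: power2_eq_square)
    have "(transpose ?G ** ?G) $ r $ c = (\<Sum>m\<in>UNIV. ?G $ m $ r * ?G $ m $ c)"
      by (simp add: matrix_matrix_mult_def transpose_def)
    also have "\<dots> = ?G $ i $ r * ?G $ i $ c + ?G $ j $ r * ?G $ j $ c
        + (\<Sum>m\<in>UNIV - {i, j}. ?G $ m $ r * ?G $ m $ c)"
    proof -
      have "UNIV = insert i (insert j (UNIV - {i, j}))" by auto
      then have "(\<Sum>m\<in>UNIV. ?G $ m $ r * ?G $ m $ c) = (\<Sum>m\<in>insert i (insert j (UNIV - {i, j})). ?G $ m $ r * ?G $ m $ c)"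
        by simp
      also have "\<dots> = ?G $ i $ r * ?G $ i $ c + ?G $ j $ r * ?G $ j $ c
        + (\<Sum>m\<in>UNIV - {i, j}. ?G $ m $ r * ?G $ m $ c)"
        using ij by (simp add: sum.insert)
      finally show ?thesis .
    qed
    also have "(\<Sum>m\<in>UNIV - {i, j}. ?G $ m $ r * ?G $ m $ c) =
        (\<Sum>m\<in>UNIV - {i, j}. if m = r then ?G $ r $ c else 0)"
      using ij by (intro sum.cong) (auto simp: Gm_nth)
    also have "\<dots> = (if r \<in> UNIV - {i, j} then ?G $ r $ c else 0)"
      using fin by (simp add: sum.delta')
    finally have e: "(transpose ?G ** ?G) $ r $ c = ?G $ i $ r * ?G $ i $ c + ?G $ j $ r * ?G $ j $ c
        + (if r \<in> UNIV - {i, j} then ?G $ r $ c else 0)" .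
    show ?thesis
      unfolding e using ij
      using ij by (cases "r = i"; cases "r = j"; cases "c = i"; cases "c = j")
         (auto simp: Gm_nth mat_def sin_cos_squared_add3 sc)
  qed
  then have "transpose ?G ** ?G = mat 1" by (simp add: vec_eq_iff)
  then show ?thesis using orthogonal_matrix by blast
qed

lemma ach_K: "ach (a *\<^sub>R Km i j)"
proof (cases "i = j")
  case True
  then have "Km i j = 0" by (simp add: Km_def)
  then show ?thesis using ach_0 by simp
next
  case False
  have "((\<lambda>t. Gm i j (a * t)) has_vector_derivative
      (0 + ((cos (a*0) - 1) *\<^sub>R 0 + (- sin (a * 0) * a) *\<^sub>R (Em i i + Em j j))
         + (sin (a*0) *\<^sub>R 0 + (cos (a * 0) * a) *\<^sub>R Km i j))) (at 0)"
    unfolding Gm_def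
    by (intro derivative_intros has_vector_derivative_scaleR) (auto intro!: derivative_eq_intros)
  then have "((\<lambda>t. Gm i j (a * t)) has_vector_derivative a *\<^sub>R Km i j) (at 0)" by simp
  moreover have "Gm i j (a * 0) = mat 1" by (simp add: Gm_def)
  ultimately show ?thesis unfolding ach_def using Gm_orth[OF False]
    by (intro exI[of _ "\<lambda>t. Gm i j (a * t)"]) auto
qed

lemma dsum1: "(\<Sum>i\<in>UNIV. \<Sum>j\<in>UNIV. if r = i \<and> c = j then f i j else 0) = (f r c :: real)" for f :: "'n::finite \<Rightarrow> 'n \<Rightarrow> real"
proof -
  have "(\<Sum>j\<in>UNIV. if r = i \<and> c = j then f i j else 0) = (if r = i then f i c else 0)" for i
    by (cases "r = i") (simp_all add: sum.delta sum.delta')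
  then show ?thesis by (simp add: sum.delta)
qed

lemma dsum2: "(\<Sum>i\<in>UNIV. \<Sum>j\<in>UNIV. if r = j \<and> c = i then f i j else 0) = (f c r :: real)" for f :: "'n::finite \<Rightarrow> 'n \<Rightarrow> real"
proof -
  have "(\<Sum>j\<in>UNIV. if r = j \<and> c = i then f i j else 0) = (if c = i then f i r else 0)" for i
    by (cases "c = i") (simp_all add: sum.delta sum.delta')
  then show ?thesis by (simp add: sum.delta)
qed

lemma skew_decomp:
  fixes A :: "real^'n^'n"
  assumes "transpose A = - A"
  shows "A = (\<Sum>i\<in>UNIV. \<Sum>j\<in>UNIV. (A $ i $ j / 2) *\<^sub>R Km i j)"
proof -
  have sk: "A $ c $ r = - A $ r $ c" for r c
  proof -
    have "transpose A $ r $ c = (-A) $ r $ c" using assms by simp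
    then show ?thesis by (simp add: transpose_def)
  qed
  have "(\<Sum>i\<in>UNIV. \<Sum>j\<in>UNIV. (A $ i $ j / 2) *\<^sub>R Km i j) $ r $ c = A $ r $ c" for r c
  proof -
    have "(\<Sum>i\<in>UNIV. \<Sum>j\<in>UNIV. (A $ i $ j / 2) *\<^sub>R Km i j) $ r $ c
      = (\<Sum>i\<in>UNIV. \<Sum>j\<in>UNIV. (A $ i $ j / 2) * ((if r = i \<and> c = j then 1 else 0) - (if r = j \<and> c = i then 1 else 0)))"
      by (simp add: Km_def Em_def)
    also have "\<dots> = (\<Sum>i\<in>UNIV. \<Sum>j\<in>UNIV. (if r = i \<and> c = j then A $ i $ j / 2 else 0)) -
        (\<Sum>i\<in>UNIV. \<Sum>j\<in>UNIV. (if r = j \<and> c = i then A $ i $ j / 2 else 0))"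
    proof -
      have h: "\<And>(x::real) P. x * (if P then 1 else 0) / 2 = (if P then x/2 else 0)" by simp
      show ?thesis by (simp add: right_diff_distrib diff_divide_distrib sum_subtractf h del: mult_if_delta)
    qed
    also have "\<dots> = A $ r $ c / 2 - A $ c $ r / 2"
      by (simp add: dsum1 dsum2)
    finally show ?thesis using sk[of r c] by simp
  qed
  then show ?thesis by (simp add: vec_eq_iff)
qed

lemma ach_skew: "transpose A = - A \<Longrightarrow> ach A"
  apply (subst skew_decomp, assumption)
  by (intro ach_sum ach_K) auto



lemma mneg_left: "(- A) ** B = - (A ** (B::real^'p^'n))"
  by (simp add: vec_eq_iff matrix_matrix_mult_def sum_negf)

lemma mneg_right: "A ** (- B) = - (A ** (B::real^'p^'n))"
  by (simp add: vec_eq_iff matrix_matrix_mult_def sum_negf)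

lemma mdiff_left: "(B - C) ** A = B ** A - C ** (A::real^'p^'n)"
  by (simp add: vec_eq_iff matrix_matrix_mult_def sum_subtractf left_diff_distrib)

lemma mdiff_right: "A ** (B - C) = A ** B - A ** (C::real^'p^'n)"
  by (simp add: vec_eq_iff matrix_matrix_mult_def sum_subtractf right_diff_distrib)

lemma S1_tangent:
  assumes V: "orthogonal_matrix V"
    and f1: "\<forall>k\<in>{1..d}. f k = V ** Jmat ns k ** transpose V"
    and f0: "\<forall>k. k \<notin> {1..d} \<longrightarrow> f k = 0"
    and A: "transpose A = - A"
    and F1: "\<forall>k\<in>{1..d}. F k = V ** (A ** Jmat ns k - Jmat ns k ** A) ** transpose V"
    and F0: "\<forall>k. k \<notin> {1..d} \<longrightarrow> F k = 0"
  shows "F \<in> tangent_space (Flag ns d) f"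
proof -
  obtain W where W: "\<forall>t. orthogonal_matrix (W t)" "W 0 = mat 1" "(W has_vector_derivative A) (at 0)"
    using ach_skew[OF A] ach_def by blast
  define \<gamma> where "\<gamma> = (\<lambda>t k. if k \<in> {1..d} then (V ** W t) ** Jmat ns k ** transpose (V ** W t) else 0)"
  have g0: "\<gamma> 0 = f" using f1 f0 W(2) by (auto simp: \<gamma>_def fun_eq_iff)
  have gF: "\<gamma> t \<in> Flag ns d" for t
    unfolding Flag_def \<gamma>_def using orthogonal_matrix_mul[OF V W(1)[rule_format, of t]]
    by (intro CollectI exI[of _ "V ** W t"]) auto
  have gd: "((\<lambda>t. \<gamma> t k) has_vector_derivative F k) (at 0)" for k
  proof (cases "k \<in> {1..d}")
    case True
    have dU: "((\<lambda>t. V ** W t) has_vector_derivative V ** A) (at 0)"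
      using deriv_mm[OF has_vector_derivative_const W(3), of V] by simp
    have dUJ: "((\<lambda>t. V ** W t ** Jmat ns k) has_vector_derivative V ** A ** Jmat ns k) (at 0)"
      using deriv_mm[OF dU has_vector_derivative_const, of "Jmat ns k"] by simp
    have dT: "((\<lambda>t. transpose (V ** W t)) has_vector_derivative transpose (V ** A)) (at 0)"
      by (rule deriv_tr[OF dU])
    have "((\<lambda>t. V ** W t ** Jmat ns k ** transpose (V ** W t)) has_vector_derivative
        V ** W 0 ** Jmat ns k ** transpose (V ** A) + V ** A ** Jmat ns k ** transpose (V ** W 0)) (at 0)"
      by (rule deriv_mm[OF dUJ dT])
    moreover have "V ** W 0 ** Jmat ns k ** transpose (V ** A) + V ** A ** Jmat ns k ** transpose (V ** W 0) = F k"
      using F1 True W(2) A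
      by (simp add: matrix_transpose_mul matrix_mul_assoc mneg_left mneg_right mdiff_left mdiff_right)
    ultimately show ?thesis using True by (simp add: \<gamma>_def)
  next
    case False
    then have "(\<lambda>t. \<gamma> t k) = (\<lambda>t. 0)" by (auto simp: \<gamma>_def fun_eq_iff)
    then show ?thesis using F0 False by (simp add: has_vector_derivative_const)
  qed
  show ?thesis unfolding tangent_space_def
    by (intro CollectI exI[of _ \<gamma>] exI[of _ 1]) (use g0 gF gd in auto)
qed



lemma flag_props:
  assumes "F \<in> Flag ns d" "k \<in> {1..d}" "l \<in> {1..d}"
  shows "transpose (F k) = F k" "F k ** F k = mat 1" "F k ** F l = F l ** F k"
proof -
  obtain W where W: "orthogonal_matrix W" "\<forall>k\<in>{1..d}. F k = W ** Jmat ns k ** transpose W"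
    using assms(1) unfolding Flag_def by blast
  have WW: "W ** transpose W = mat 1" using W(1) unfolding orthogonal_matrix_def by simp
  show "transpose (F k) = F k" using W(2) assms(2)
    by (simp add: matrix_transpose_mul matrix_mul_assoc Jmat_tr)
  show "F k ** F k = mat 1" using W(2) assms(2)
    by (simp add: orth_conj_mult[OF W(1)] Jmat_sq WW)
  show "F k ** F l = F l ** F k" using W(2) assms(2,3)
    by (simp add: orth_conj_mult[OF W(1)] Jmat_comm)
qed

lemma conj_add: "V ** A ** transpose V + V ** B ** transpose V = V ** (A + B) ** (transpose V :: real^'n^'n)"
  by (simp add: matrix_add_ldistrib matrix_add_rdistrib')

lemma conj_diff: "V ** A ** transpose V - V ** B ** transpose V = V ** (A - B) ** (transpose V :: real^'n^'n)"
  by (simp add: mdiff_left mdiff_right)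

lemma tangent_S2:
  fixes V :: "real^('n::{finite,linorder})^('n::{finite,linorder})"
  assumes V: "orthogonal_matrix V"
    and f1: "\<forall>k\<in>{1..d}. f k = V ** Jmat ns k ** transpose V"
    and f0: "\<forall>k. k \<notin> {1..d} \<longrightarrow> f k = 0"
    and v: "v \<in> tangent_space (Flag ns d) f"
  shows "\<exists>X::nat \<Rightarrow> real^('n::{finite,linorder})^('n::{finite,linorder}).
          (\<forall>k\<in>{1..d}. transpose (X k) = X k \<and> v k = V ** X k ** transpose V) \<and>
          (\<forall>k\<in>{1..d}. \<forall>l\<in>{1..d}. l \<noteq> k \<longrightarrow>
              (\<forall>i j. blk ns i = k \<and> blk ns j = l \<longrightarrow> X k $ i $ j = - (X l $ i $ j))) \<and>
          (\<forall>k\<in>{1..d}. \<forall>i j. blk ns i \<noteq> k \<and> blk ns j \<noteq> k \<longrightarrow> X k $ i $ j = 0) \<and>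
          (\<forall>k\<in>{1..d}. \<forall>i j. blk ns i = k \<and> blk ns j = k \<longrightarrow> X k $ i $ j = 0) \<and>
          (\<forall>k. k \<notin> {1..d} \<longrightarrow> v k = 0)"
proof -
  obtain \<gamma> e where ge: "e > 0" "\<gamma> 0 = f" "\<forall>t. \<bar>t\<bar> < e \<longrightarrow> \<gamma> t \<in> Flag ns d"
     and gd: "\<And>k. ((\<lambda>t. \<gamma> t k) has_vector_derivative v k) (at 0)"
    using v unfolding tangent_space_def by blast
  have VV: "V ** transpose V = mat 1" "transpose V ** V = mat 1"
    using V unfolding orthogonal_matrix_def by auto
  define X where "X = (\<lambda>k. transpose V ** v k ** V)"
  have vX: "v k = V ** X k ** transpose V" for k
  proof -
    have "V ** X k ** transpose V = (V ** transpose V) ** v k ** (V ** transpose V)"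
      unfolding X_def by (simp only: matrix_mul_assoc)
    then show ?thesis by (simp add: VV)
  qed
  have v0: "v k = 0" if "k \<notin> {1..d}" for k
  proof -
    have "\<forall>t. \<bar>t\<bar> < e \<longrightarrow> \<gamma> t k = 0" using ge(3) that unfolding Flag_def by blast
    then show ?thesis using deriv_const_zero[OF gd ge(1)] by blast
  qed
  have vsym: "transpose (v k) = v k" if k: "k \<in> {1..d}" for k
  proof -
    have "((\<lambda>t. transpose (\<gamma> t k) - \<gamma> t k) has_vector_derivative transpose (v k) - v k) (at 0)"
      by (intro has_vector_derivative_diff deriv_tr gd)
    moreover have "\<forall>t. \<bar>t\<bar> < e \<longrightarrow> transpose (\<gamma> t k) - \<gamma> t k = 0"
      using ge(3) flag_props(1)[OF _ k k] by auto
    ultimately have "transpose (v k) - v k = 0" using deriv_const_zero ge(1) by blast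
    then show ?thesis by simp
  qed
  have vsq: "f k ** v k + v k ** f k = 0" if k: "k \<in> {1..d}" for k
  proof -
    have "((\<lambda>t. \<gamma> t k ** \<gamma> t k) has_vector_derivative \<gamma> 0 k ** v k + v k ** \<gamma> 0 k) (at 0)"
      by (rule deriv_mm[OF gd gd])
    moreover have "\<forall>t. \<bar>t\<bar> < e \<longrightarrow> \<gamma> t k ** \<gamma> t k = mat 1"
      using ge(3) flag_props(2)[OF _ k k] by auto
    ultimately show ?thesis using deriv_const_zero ge(1,2) by blast
  qed
  have vcomm: "(f k ** v l + v k ** f l) - (f l ** v k + v l ** f k) = 0"
    if k: "k \<in> {1..d}" and l: "l \<in> {1..d}" for k l
  proof -
    have "((\<lambda>t. \<gamma> t k ** \<gamma> t l - \<gamma> t l ** \<gamma> t k) has_vector_derivative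
        (\<gamma> 0 k ** v l + v k ** \<gamma> 0 l) - (\<gamma> 0 l ** v k + v l ** \<gamma> 0 k)) (at 0)"
      by (intro has_vector_derivative_diff deriv_mm gd)
    moreover have "\<forall>t. \<bar>t\<bar> < e \<longrightarrow> \<gamma> t k ** \<gamma> t l - \<gamma> t l ** \<gamma> t k = 0"
      using ge(3) flag_props(3)[OF _ k l] by auto
    ultimately show ?thesis using deriv_const_zero ge(1,2) by blast
  qed
  have Xsym: "transpose (X k) = X k" if "k \<in> {1..d}" for k
    using vsym[OF that] unfolding X_def by (simp add: matrix_transpose_mul matrix_mul_assoc)
  have Xsq: "Jmat ns k ** X k + X k ** Jmat ns k = 0" if k: "k \<in> {1..d}" for k
  proof -
    have "V ** (Jmat ns k ** X k + X k ** Jmat ns k) ** transpose V = V ** 0 ** transpose V"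
      using vsq[OF k] f1 k by (simp add: vX orth_conj_mult[OF V] conj_add)
    then show ?thesis by (rule orth_conj_inj[OF V])
  qed
  have Xcomm: "(Jmat ns k ** X l + X k ** Jmat ns l) - (Jmat ns l ** X k + X l ** Jmat ns k) = 0"
    if k: "k \<in> {1..d}" and l: "l \<in> {1..d}" for k l
  proof -
    have "V ** (Jmat ns k ** X l + X k ** Jmat ns l) ** transpose V = V ** (Jmat ns l ** X k + X l ** Jmat ns k) ** transpose V"
      using vcomm[OF k l] f1 k l by (simp add: vX orth_conj_mult[OF V] conj_add conj_diff)
    then have "Jmat ns k ** X l + X k ** Jmat ns l = Jmat ns l ** X k + X l ** Jmat ns k"
      by (rule orth_conj_inj[OF V])
    then show ?thesis by simp
  qed
  have Xe: "sg ns k i * X k $ i $ j + X k $ i $ j * sg ns k j = 0" if k: "k \<in> {1..d}" for k i j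
  proof -
    have "(Jmat ns k ** X k + X k ** Jmat ns k) $ i $ j = 0" using Xsq[OF k] by simp
    then show ?thesis by (simp add: Jmat_left Jmat_right)
  qed
  have Xc: "(sg ns k i * X l $ i $ j + X k $ i $ j * sg ns l j) - (sg ns l i * X k $ i $ j + X l $ i $ j * sg ns k j) = 0"
    if k: "k \<in> {1..d}" and l: "l \<in> {1..d}" for k l i j
  proof -
    have "((Jmat ns k ** X l + X k ** Jmat ns l) - (Jmat ns l ** X k + X l ** Jmat ns k)) $ i $ j = 0"
      using Xcomm[OF k l] by simp
    then show ?thesis by (simp add: Jmat_left Jmat_right)
  qed
  show ?thesis
  proof (intro exI[of _ X] conjI ballI allI impI)
    fix k assume "k \<in> {1..d}" then show "transpose (X k) = X k" by (rule Xsym)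
  next
    fix k show "v k = V ** X k ** transpose V" by (rule vX)
  next
    fix k l and i j :: 'n assume k: "k \<in> {1..d}" and l: "l \<in> {1..d}" "l \<noteq> k" and b: "blk ns i = k \<and> blk ns j = l"
    show "X k $ i $ j = - (X l $ i $ j)" using Xc[OF k l(1), of i j] b l(2) by (simp add: sg_def)
  next
    fix k and i j :: 'n assume k: "k \<in> {1..d}" and b: "blk ns i \<noteq> k \<and> blk ns j \<noteq> k"
    show "X k $ i $ j = 0" using Xe[OF k, of i j] b by (simp add: sg_def)
  next
    fix k and i j :: 'n assume k: "k \<in> {1..d}" and b: "blk ns i = k \<and> blk ns j = k"
    show "X k $ i $ j = 0" using Xe[OF k, of i j] b by (simp add: sg_def)
  next
    fix k :: nat assume "k \<notin> {1..d}" then show "v k = 0" by (rule v0)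
  qed
qed



lemma S2_S1:
  fixes V :: "real^('n::{finite,linorder})^('n::{finite,linorder})"
    and X :: "nat \<Rightarrow> real^('n::{finite,linorder})^('n::{finite,linorder})"
  assumes ns0: "ns 0 = 0" and nsd: "ns (d + 1) = CARD('n::{finite,linorder})"
    and X1: "\<forall>k\<in>{1..d}. transpose (X k) = X k \<and> F k = V ** X k ** transpose V"
    and X2: "\<forall>k\<in>{1..d}. \<forall>l\<in>{1..d}. l \<noteq> k \<longrightarrow>
              (\<forall>i j. blk ns i = k \<and> blk ns j = l \<longrightarrow> X k $ i $ j = - (X l $ i $ j))"
    and X3: "\<forall>k\<in>{1..d}. \<forall>i j. blk ns i \<noteq> k \<and> blk ns j \<noteq> k \<longrightarrow> X k $ i $ j = 0"
    and X4: "\<forall>k\<in>{1..d}. \<forall>i j. blk ns i = k \<and> blk ns j = k \<longrightarrow> X k $ i $ j = 0"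
  shows "\<exists>A::real^('n::{finite,linorder})^('n::{finite,linorder}). transpose A = - A \<and>
          (\<forall>i j. blk ns i = blk ns j \<longrightarrow> A $ i $ j = 0) \<and>
          (\<forall>k\<in>{1..d}. F k = V ** (A ** Jmat ns k - Jmat ns k ** A) ** transpose V)"
proof -
  have rng: "1 \<le> blk ns i \<and> blk ns i \<le> d + 1" for i :: 'n
    using blk_range[OF ns0 nsd] .
  have sym: "X k $ j $ i = X k $ i $ j" if "k \<in> {1..d}" for k i j
  proof -
    have "transpose (X k) $ i $ j = X k $ i $ j" using X1 that by simp
    then show ?thesis by (simp add: transpose_def)
  qed
  define A :: "real^('n::{finite,linorder})^('n::{finite,linorder})" where "A = (\<chi> i j. if blk ns i = blk ns j then 0
      else if blk ns j \<in> {1..d} then X (blk ns j) $ i $ j / 2 else - X (blk ns i) $ i $ j / 2)"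
  have Ae: "A $ i $ j = (if blk ns i = blk ns j then 0
      else if blk ns j \<in> {1..d} then X (blk ns j) $ i $ j / 2 else - X (blk ns i) $ i $ j / 2)" for i j
    by (simp add: A_def)
  have skew: "A $ j $ i = - A $ i $ j" for i j
  proof (cases "blk ns i = blk ns j")
    case True then show ?thesis by (simp add: Ae)
  next
    case False
    show ?thesis
    proof (cases "blk ns i \<in> {1..d}"; cases "blk ns j \<in> {1..d}")
      assume a: "blk ns i \<in> {1..d}" "blk ns j \<in> {1..d}"
      have "X (blk ns i) $ i $ j = - X (blk ns j) $ i $ j" by (rule X2[rule_format, OF a(1) a(2)]) (use False in auto)
      then show ?thesis using a False sym[OF a(1), of i j] by (simp add: Ae)
    next
      assume a: "blk ns i \<in> {1..d}" "blk ns j \<notin> {1..d}"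
      then show ?thesis using False sym[OF a(1), of i j] by (auto simp: Ae)
    next
      assume a: "blk ns i \<notin> {1..d}" "blk ns j \<in> {1..d}"
      then show ?thesis using False sym[OF a(2), of i j] by (auto simp: Ae)
    next
      assume a: "blk ns i \<notin> {1..d}" "blk ns j \<notin> {1..d}"
      then have "blk ns i = d + 1" "blk ns j = d + 1" using rng[of i] rng[of j] by auto
      then show ?thesis using False by simp
    qed
  qed
  have XA: "X k = A ** Jmat ns k - Jmat ns k ** A" if k: "k \<in> {1..d}" for k
  proof -
    have "X k $ i $ j = A $ i $ j * sg ns k j - sg ns k i * A $ i $ j" for i j
    proof (cases "blk ns i = k"; cases "blk ns j = k")
      assume a: "blk ns i = k" "blk ns j = k"
      then show ?thesis using X4 k by (simp add: Ae sg_def)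
    next
      assume a: "blk ns i = k" "blk ns j \<noteq> k"
      show ?thesis
      proof (cases "blk ns j \<in> {1..d}")
        case True
        have "X k $ i $ j = - X (blk ns j) $ i $ j" by (rule X2[rule_format, OF k True]) (use a in auto)
        then show ?thesis using a True by (simp add: Ae sg_def)
      next
        case False
        then show ?thesis using a by (auto simp: Ae sg_def)
      qed
    next
      assume a: "blk ns i \<noteq> k" "blk ns j = k"
      then show ?thesis using k by (auto simp: Ae sg_def)
    next
      assume a: "blk ns i \<noteq> k" "blk ns j \<noteq> k"
      then show ?thesis using X3 k by (simp add: sg_def)
    qed
    then show ?thesis by (simp add: vec_eq_iff Jmat_left Jmat_right)
  qed
  show ?thesis
  proof (intro exI[of _ A] conjI allI impI ballI)
    have "transpose A $ i $ j = (- A) $ i $ j" for i j using skew[of j i] by (simp add: transpose_def)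
    then show "transpose A = - A" by (simp add: vec_eq_iff)
  next
    fix i j :: 'n assume "blk ns i = blk ns j" then show "A $ i $ j = 0" by (simp add: Ae)
  next
    fix k assume "k \<in> {1..d}" then show "F k = V ** (A ** Jmat ns k - Jmat ns k ** A) ** transpose V"
      using X1 XA by simp
  qed
qed

lemma S1_S2:
  fixes V :: "real^('n::{finite,linorder})^('n::{finite,linorder})"
    and A :: "real^('n::{finite,linorder})^('n::{finite,linorder})"
  assumes A: "transpose A = - A"
    and F1: "\<forall>k\<in>{1..d}. F k = V ** (A ** Jmat ns k - Jmat ns k ** A) ** transpose V"
  shows "\<exists>X::nat \<Rightarrow> real^('n::{finite,linorder})^('n::{finite,linorder}).
          (\<forall>k\<in>{1..d}. transpose (X k) = X k \<and> F k = V ** X k ** transpose V) \<and>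
          (\<forall>k\<in>{1..d}. \<forall>l\<in>{1..d}. l \<noteq> k \<longrightarrow>
              (\<forall>i j. blk ns i = k \<and> blk ns j = l \<longrightarrow> X k $ i $ j = - (X l $ i $ j))) \<and>
          (\<forall>k\<in>{1..d}. \<forall>i j. blk ns i \<noteq> k \<and> blk ns j \<noteq> k \<longrightarrow> X k $ i $ j = 0) \<and>
          (\<forall>k\<in>{1..d}. \<forall>i j. blk ns i = k \<and> blk ns j = k \<longrightarrow> X k $ i $ j = 0)"
proof -
  define X where "X = (\<lambda>k. A ** Jmat ns k - Jmat ns k ** A)"
  have Xe: "X k $ i $ j = A $ i $ j * sg ns k j - sg ns k i * A $ i $ j" for k i j
    by (simp add: X_def Jmat_left Jmat_right)
  have skA: "A $ j $ i = - A $ i $ j" for i j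
  proof -
    have "transpose A $ i $ j = (-A) $ i $ j" using A by simp
    then show ?thesis by (simp add: transpose_def)
  qed
  show ?thesis
  proof (intro exI[of _ X] conjI allI impI ballI)
    fix k assume "k \<in> {1..d}"
    show "transpose (X k) = X k"
    proof -
      have "transpose (X k) $ i $ j = X k $ i $ j" for i j
        using skA[of i j] by (simp add: transpose_def Xe algebra_simps)
      then show ?thesis by (simp add: vec_eq_iff)
    qed
  next
    fix k assume "k \<in> {1..d}" then show "F k = V ** X k ** transpose V" using F1 by (simp add: X_def)
  next
    fix k l and i j :: 'n assume "l \<noteq> k" "blk ns i = k \<and> blk ns j = l"
    then show "X k $ i $ j = - (X l $ i $ j)" by (auto simp: Xe sg_def)
  next
    fix k and i j :: 'n assume "blk ns i \<noteq> k \<and> blk ns j \<noteq> k"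
    then show "X k $ i $ j = 0" by (auto simp: Xe sg_def)
  next
    fix k and i j :: 'n assume "blk ns i = k \<and> blk ns j = k"
    then show "X k $ i $ j = 0" by (auto simp: Xe sg_def)
  qed
qed



theorem proposition3p2:
  fixes ns :: "nat \<Rightarrow> nat" and d :: nat and V :: "real^('n::{finite,linorder})^('n::{finite,linorder})"
    and f :: "nat \<Rightarrow> real^('n::{finite,linorder})^('n::{finite,linorder})"
  assumes "d \<ge> 1"
    and "ns 0 = 0" and "ns (d + 1) = CARD('n::{finite,linorder})"
    and "\<forall>k\<le>d. ns k < ns (Suc k)"
    and "orthogonal_matrix V"
    and "\<forall>k\<in>{1..d}. f k = V ** Jmat ns k ** transpose V"
    and "\<forall>k. k \<notin> {1..d} \<longrightarrow> f k = 0"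
  shows "tangent_space (Flag ns d) f =
      {F. \<exists>A::real^('n::{finite,linorder})^('n::{finite,linorder}). transpose A = - A \<and>
          (\<forall>i j. blk ns i = blk ns j \<longrightarrow> A $ i $ j = 0) \<and>
          (\<forall>k\<in>{1..d}. F k = V ** (A ** Jmat ns k - Jmat ns k ** A) ** transpose V) \<and>
          (\<forall>k. k \<notin> {1..d} \<longrightarrow> F k = 0)}
    \<and> tangent_space (Flag ns d) f =
      {F. \<exists>X::nat \<Rightarrow> real^('n::{finite,linorder})^('n::{finite,linorder}).
          (\<forall>k\<in>{1..d}. transpose (X k) = X k \<and> F k = V ** X k ** transpose V) \<and>
          (\<forall>k\<in>{1..d}. \<forall>l\<in>{1..d}. l \<noteq> k \<longrightarrow>
              (\<forall>i j. blk ns i = k \<and> blk ns j = l \<longrightarrow> X k $ i $ j = - (X l $ i $ j))) \<and>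
          (\<forall>k\<in>{1..d}. \<forall>i j. blk ns i \<noteq> k \<and> blk ns j \<noteq> k \<longrightarrow> X k $ i $ j = 0) \<and>
          (\<forall>k\<in>{1..d}. \<forall>i j. blk ns i = k \<and> blk ns j = k \<longrightarrow> X k $ i $ j = 0) \<and>
          (\<forall>k. k \<notin> {1..d} \<longrightarrow> F k = 0)}"
proof -
  let ?T = "tangent_space (Flag ns d) f"
  let ?S1 = "{F. \<exists>A::real^('n::{finite,linorder})^('n::{finite,linorder}). transpose A = - A \<and>
          (\<forall>i j. blk ns i = blk ns j \<longrightarrow> A $ i $ j = 0) \<and>
          (\<forall>k\<in>{1..d}. F k = V ** (A ** Jmat ns k - Jmat ns k ** A) ** transpose V) \<and>
          (\<forall>k. k \<notin> {1..d} \<longrightarrow> F k = 0)}"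
  let ?S2 = "{F. \<exists>X::nat \<Rightarrow> real^('n::{finite,linorder})^('n::{finite,linorder}).
          (\<forall>k\<in>{1..d}. transpose (X k) = X k \<and> F k = V ** X k ** transpose V) \<and>
          (\<forall>k\<in>{1..d}. \<forall>l\<in>{1..d}. l \<noteq> k \<longrightarrow>
              (\<forall>i j. blk ns i = k \<and> blk ns j = l \<longrightarrow> X k $ i $ j = - (X l $ i $ j))) \<and>
          (\<forall>k\<in>{1..d}. \<forall>i j. blk ns i \<noteq> k \<and> blk ns j \<noteq> k \<longrightarrow> X k $ i $ j = 0) \<and>
          (\<forall>k\<in>{1..d}. \<forall>i j. blk ns i = k \<and> blk ns j = k \<longrightarrow> X k $ i $ j = 0) \<and>
          (\<forall>k. k \<notin> {1..d} \<longrightarrow> F k = 0)}"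
  have T2: "?T \<subseteq> ?S2"
  proof
    fix v assume v: "v \<in> ?T"
    show "v \<in> ?S2" unfolding mem_Collect_eq by (rule tangent_S2[OF assms(5) assms(6) assms(7) v])
  qed
  have S21: "?S2 \<subseteq> ?S1"
  proof
    fix F assume "F \<in> ?S2"
    then obtain X where X: "(\<forall>k\<in>{1..d}. transpose (X k) = X k \<and> F k = V ** X k ** transpose V) \<and>
          (\<forall>k\<in>{1..d}. \<forall>l\<in>{1..d}. l \<noteq> k \<longrightarrow>
              (\<forall>i j. blk ns i = k \<and> blk ns j = l \<longrightarrow> X k $ i $ j = - (X l $ i $ j))) \<and>
          (\<forall>k\<in>{1..d}. \<forall>i j. blk ns i \<noteq> k \<and> blk ns j \<noteq> k \<longrightarrow> X k $ i $ j = 0) \<and>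
          (\<forall>k\<in>{1..d}. \<forall>i j. blk ns i = k \<and> blk ns j = k \<longrightarrow> X k $ i $ j = 0) \<and>
          (\<forall>k. k \<notin> {1..d} \<longrightarrow> F k = 0)"
      unfolding mem_Collect_eq by (rule exE)
    obtain A where A: "transpose A = - A \<and>
          (\<forall>i j. blk ns i = blk ns j \<longrightarrow> A $ i $ j = 0) \<and>
          (\<forall>k\<in>{1..d}. F k = V ** (A ** Jmat ns k - Jmat ns k ** A) ** transpose V)"
      using S2_S1[OF assms(2) assms(3) conjunct1[OF X] conjunct1[OF conjunct2[OF X]]
        conjunct1[OF conjunct2[OF conjunct2[OF X]]] conjunct1[OF conjunct2[OF conjunct2[OF conjunct2[OF X]]]]]
      by (rule exE)
    have F0: "\<forall>k. k \<notin> {1..d} \<longrightarrow> F k = 0"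
      using conjunct2[OF conjunct2[OF conjunct2[OF conjunct2[OF X]]]] .
    show "F \<in> ?S1" unfolding mem_Collect_eq
      by (rule exI[of _ A]) (intro conjI conjunct1[OF A] conjunct1[OF conjunct2[OF A]] conjunct2[OF conjunct2[OF A]] F0)
  qed
  have S1T: "?S1 \<subseteq> ?T"
  proof
    fix F assume "F \<in> ?S1"
    then obtain A where A: "transpose A = - A \<and>
          (\<forall>i j. blk ns i = blk ns j \<longrightarrow> A $ i $ j = 0) \<and>
          (\<forall>k\<in>{1..d}. F k = V ** (A ** Jmat ns k - Jmat ns k ** A) ** transpose V) \<and>
          (\<forall>k. k \<notin> {1..d} \<longrightarrow> F k = 0)"
      unfolding mem_Collect_eq by (rule exE)
    show "F \<in> ?T"
      by (rule S1_tangent[OF assms(5) assms(6) assms(7) conjunct1[OF A]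
          conjunct1[OF conjunct2[OF conjunct2[OF A]]] conjunct2[OF conjunct2[OF conjunct2[OF A]]]])
  qed
  have e1: "?T = ?S1" by (rule subset_antisym[OF order_trans[OF T2 S21] S1T])
  have e2: "?T = ?S2" by (rule subset_antisym[OF T2 order_trans[OF S21 S1T]])
  show ?thesis by (rule conjI[OF e1 e2])
qed

end
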